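(* Let $L>0$, $a>0$, $u_0>0$, and let $\texttt{sat}:\mathbb{R}\to\mathbb{R}$ be $\texttt{sat}(s)=-u_0$ if $s<-u_0$, $\texttt{sat}(s)=s$ if $-u_0\le s\le u_0$, $\texttt{sat}(s)=u_0$ if $s>u_0$. Let $\tilde\lambda>0$ and $u\in H^3_L(0,L)$. Then there exists $\tilde u\in H^3(0,L)$ solving \[ \begin{cases} \tilde\lambda\tilde u+\tilde u'''+\tilde u'+a\,\texttt{sat}(\tilde u)=\tilde\lambda u \quad\text{on }(0,L),\\ \tilde u(0)=\tilde u(L)=\tilde u'(L)=0, \end{cases} \] where $\texttt{sat}$ is applied pointwise.
   Context: $H^3(0,L)$ is the set of $u\in L^2(0,L)$ with $u_x,u_{xx},u_{xxx}\in L^2(0,L)$, and $H^3_L(0,L):=\{w\in H^3(0,L): w(0)=w(L)=w'(L)=0\}$. *)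

theory Defs
  imports "HOL-Analysis.Analysis"
begin

definition sat :: "real \<Rightarrow> real \<Rightarrow> real" where
  "sat u0 s = (if s < - u0 then - u0 else if s \<le> u0 then s else u0)"

(* phi is a test function in C_c^\<infinity>(0,L): smooth on the real line, all
   derivatives given by D, with support contained in a compact subset of (0,L) *)
definition test_fun :: "real \<Rightarrow> (real \<Rightarrow> real) \<Rightarrow> bool" where
  "test_fun L phi \<longleftrightarrow>
     (\<exists>D :: nat \<Rightarrow> real \<Rightarrow> real. D 0 = phi \<and>
        (\<forall>k x. (D k has_real_derivative D (Suc k) x) (at x))) \<and>
     (\<exists>e>0. \<forall>x. x < e \<or> x > L - e \<longrightarrow> phi x = 0)"

definition L2_on :: "real \<Rightarrow> (real \<Rightarrow> real) \<Rightarrow> bool" where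
  "L2_on L f \<longleftrightarrow> set_borel_measurable lborel {0<..<L} f \<and>
     set_integrable lborel {0<..<L} (\<lambda>x. (f x)\<^sup>2)"

definition weak_deriv :: "real \<Rightarrow> (real \<Rightarrow> real) \<Rightarrow> (real \<Rightarrow> real) \<Rightarrow> bool" where
  "weak_deriv L f g \<longleftrightarrow>
     (\<forall>phi. test_fun L phi \<longrightarrow>
        (LINT x:{0<..<L}|lborel. f x * deriv phi x) = - (LINT x:{0<..<L}|lborel. g x * phi x))"

(* u \<in> H^3(0,L) with weak derivatives u1 = u', u2 = u'', u3 = u''';
   u, u1, u2 are taken as the continuous representatives on [0,L]
   (which always exist), so point values such as u 0, u1 L are meaningful. *)
definition H3 :: "real \<Rightarrow> (real \<Rightarrow> real) \<Rightarrow> (real \<Rightarrow> real) \<Rightarrow> (real \<Rightarrow> real)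
                    \<Rightarrow> (real \<Rightarrow> real) \<Rightarrow> bool" where
  "H3 L u u1 u2 u3 \<longleftrightarrow>
     L2_on L u \<and> L2_on L u1 \<and> L2_on L u2 \<and> L2_on L u3 \<and>
     weak_deriv L u u1 \<and> weak_deriv L u1 u2 \<and> weak_deriv L u2 u3 \<and>
     continuous_on {0..L} u \<and> continuous_on {0..L} u1 \<and> continuous_on {0..L} u2"

end

theory Submission
  imports Defs
begin

definition J :: "real \<Rightarrow> (real \<Rightarrow> real) \<Rightarrow> real \<Rightarrow> real" where
  "J L g t = integral {t..L} g"

lemma J_deriv:
  assumes "continuous_on {0..L} g" "t \<in> {0..L}"
  shows "(J L g has_real_derivative - g t) (at t within {0..L})"
  unfolding J_def[abs_def] using integral_has_real_derivative'[OF assms] .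

lemma J_cont:
  assumes "continuous_on {0..L} g"
  shows "continuous_on {0..L} (J L g)"
  unfolding continuous_on_eq_continuous_within
  using J_deriv[OF assms] DERIV_continuous by blast

lemma J_deriv_at:
  assumes "continuous_on {0..L} g" "t \<in> {0<..<L}"
  shows "(J L g has_real_derivative - g t) (at t)"
  using J_deriv[OF assms(1), of t] assms(2) by (simp add: at_within_Icc_at)

lemma J_L: "J L g L = 0" by (simp add: J_def)

lemma J_mult: "J L (\<lambda>s. c * f s) t = c * J L f t"
  unfolding J_def by simp

lemma J_diff:
  assumes "continuous_on {0..L} f" "continuous_on {0..L} g" "t \<in> {0..L}"
  shows "J L (\<lambda>s. f s - g s) t = J L f t - J L g t"
proof -
  have "{t..L} \<subseteq> {0..L}" using assms(3) by auto
  then have "f integrable_on {t..L}" "g integrable_on {t..L}"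
    using assms by (meson integrable_continuous_real continuous_on_subset)+
  then show ?thesis unfolding J_def by (rule integral_diff)
qed

lemma J_bound_const:
  assumes "continuous_on {0..L} g" "t \<in> {0..L}" "\<And>r. r \<in> {0..L} \<Longrightarrow> \<bar>g r\<bar> \<le> B"
  shows "\<bar>J L g t\<bar> \<le> B * L"
proof -
  have sub: "{t..L} \<subseteq> {0..L}" using assms(2) by auto
  then have i: "g integrable_on {t..L}"
    using assms by (meson integrable_continuous_real continuous_on_subset)
  have B: "B \<ge> 0" using assms(3)[of t] assms(2) by linarith
  have "norm (integral {t..L} g) \<le> integral {t..L} (\<lambda>_. B)"
  proof (rule integral_norm_bound_integral[OF i])
    show "(\<lambda>_. B) integrable_on {t..L}" by (rule integrable_const_ivl)
    fix x assume "x \<in> {t..L}" then show "norm (g x) \<le> B" using assms(3) sub by auto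
  qed
  also have "\<dots> = (L - t) * B" using assms(2) by simp
  also have "\<dots> \<le> B * L" using assms(2) B by (simp add: algebra_simps)
  finally show ?thesis by (simp add: J_def)
qed

lemma J_bound_exp:
  assumes "continuous_on {0..L} g" "t \<in> {0..L}" "M > 0"
    "\<And>r. r \<in> {0..L} \<Longrightarrow> \<bar>g r\<bar> \<le> B * exp (M * (L - r))"
  shows "\<bar>J L g t\<bar> \<le> B / M * exp (M * (L - t))"
proof -
  have sub: "{t..L} \<subseteq> {0..L}" using assms(2) by auto
  then have i: "g integrable_on {t..L}"
    using assms by (meson integrable_continuous_real continuous_on_subset)
  have "0 \<le> B * exp (M * (L - t))" using assms(4)[of t] assms(2) by linarith
  then have B: "B \<ge> 0" by (simp add: zero_le_mult_iff)
  have F: "((\<lambda>r. B * exp (M * (L - r))) has_integral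
       ((- B / M * exp (M * (L - L))) - (- B / M * exp (M * (L - t))))) {t..L}"
  proof (rule fundamental_theorem_of_calculus)
    show "t \<le> L" using assms(2) by auto
    fix x assume "x \<in> {t..L}"
    have "((\<lambda>r. - B / M * exp (M * (L - r))) has_real_derivative
          B * exp (M * (L - x))) (at x within {t..L})"
      apply (rule derivative_eq_intros refl)+
      using assms(3) by simp
    then show "((\<lambda>r. - B / M * exp (M * (L - r))) has_vector_derivative B * exp (M * (L - x)))
           (at x within {t..L})"
      unfolding has_real_derivative_iff_has_vector_derivative[symmetric] by simp
  qed
  have "norm (integral {t..L} g) \<le> integral {t..L} (\<lambda>r. B * exp (M * (L - r)))"
  proof (rule integral_norm_bound_integral[OF i])
    show "(\<lambda>r. B * exp (M * (L - r))) integrable_on {t..L}" using F by blast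
    fix x assume "x \<in> {t..L}" then show "norm (g x) \<le> B * exp (M * (L - x))" using assms(4) sub by auto
  qed
  also have "\<dots> = B / M * exp (M * (L - t)) - B / M"
    using integral_unique[OF F] by simp
  also have "\<dots> \<le> B / M * exp (M * (L - t))" using B assms(3) by simp
  finally show ?thesis by (simp add: J_def)
qed

lemma sat_alt: "u0 \<ge> 0 \<Longrightarrow> sat u0 x = max (- u0) (min x u0)"
  by (simp add: sat_def)

lemma sat_lip: "u0 \<ge> 0 \<Longrightarrow> \<bar>sat u0 x - sat u0 y\<bar> \<le> \<bar>x - y\<bar>"
  by (simp add: sat_def)

lemma sat_bound: "u0 \<ge> 0 \<Longrightarrow> \<bar>sat u0 x\<bar> \<le> u0"
  by (simp add: sat_def abs_le_iff)

lemma sat_cont: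
  assumes "u0 \<ge> 0" "continuous_on S f"
  shows "continuous_on S (\<lambda>x. sat u0 (f x))"
  unfolding sat_alt[OF assms(1)] by (intro continuous_intros assms(2))

definition F :: "real \<Rightarrow> real \<Rightarrow> real \<Rightarrow> real \<Rightarrow> (real\<Rightarrow>real) \<Rightarrow> (real\<Rightarrow>real) \<Rightarrow> real \<Rightarrow> real" where
  "F L lam u0 a u p s = lam * u s - lam * J L (J L p) s + J L p s - a * sat u0 (J L (J L p) s)"

definition Tf :: "real \<Rightarrow> real \<Rightarrow> real \<Rightarrow> real \<Rightarrow> (real\<Rightarrow>real) \<Rightarrow> real \<Rightarrow> (real\<Rightarrow>real) \<Rightarrow> real \<Rightarrow> real" where
  "Tf L lam u0 a u c p t = c - J L (F L lam u0 a u p) t"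

lemma F_cont:
  assumes "u0 \<ge> 0" "continuous_on {0..L} u" "continuous_on {0..L} p"
  shows "continuous_on {0..L} (F L lam u0 a u p)"
proof -
  have c1: "continuous_on {0..L} (J L p)" by (rule J_cont[OF assms(3)])
  have c2: "continuous_on {0..L} (J L (J L p))" by (rule J_cont[OF c1])
  have c3: "continuous_on {0..L} (\<lambda>s. sat u0 (J L (J L p) s))" by (rule sat_cont[OF assms(1) c2])
  show ?thesis unfolding F_def[abs_def]
    by (intro continuous_intros assms c1 c2 c3)
qed

lemma Tf_cont:
  assumes "u0 \<ge> 0" "continuous_on {0..L} u" "continuous_on {0..L} p"
  shows "continuous_on {0..L} (Tf L lam u0 a u c p)"
proof -
  have "continuous_on {0..L} (J L (F L lam u0 a u p))" by (rule J_cont[OF F_cont[OF assms]])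
  then show ?thesis unfolding Tf_def[abs_def] by (intro continuous_intros)
qed

lemma J_diff_bound:
  assumes "continuous_on {0..L} p" "continuous_on {0..L} q" "M > 0"
    "\<And>r. r \<in> {0..L} \<Longrightarrow> \<bar>p r - q r\<bar> \<le> B * exp (M * (L - r))" "t \<in> {0..L}"
  shows "\<bar>J L p t - J L q t\<bar> \<le> B / M * exp (M * (L - t))"
proof -
  have c: "continuous_on {0..L} (\<lambda>s. p s - q s)" by (intro continuous_intros assms)
  show ?thesis using J_bound_exp[OF c assms(5) assms(3) assms(4)] J_diff[OF assms(1,2,5)] by simp
qed

lemma tri3: "\<bar>- A + B - C\<bar> \<le> \<bar>A\<bar> + \<bar>B\<bar> + \<bar>C::real\<bar>"
  by arith

lemma tri2: "\<bar>- A + B\<bar> \<le> \<bar>A\<bar> + \<bar>B::real\<bar>"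
  by arith

lemma contr:
  assumes "lam > 0" "0 \<le> a'" "a' \<le> a" "u0 \<ge> 0" "M = lam + a + 2"
    "continuous_on {0..L} u" "continuous_on {0..L} p" "continuous_on {0..L} q"
    "\<And>r. r \<in> {0..L} \<Longrightarrow> \<bar>p r - q r\<bar> \<le> D * exp (M * (L - r))" "t \<in> {0..L}"
  shows "\<bar>Tf L lam u0 a' u c p t - Tf L lam u0 a' u c q t\<bar> \<le> D / 2 * exp (M * (L - t))"
proof -
  have M: "M \<ge> 2" using assms by simp
  then have M0: "M > 0" by simp
  have "0 \<le> D * exp (M * (L - t))" using assms(9)[OF assms(10)] by (meson abs_ge_zero order_trans)
  then have D: "D \<ge> 0" by (simp add: zero_le_mult_iff)
  have cp1: "continuous_on {0..L} (J L p)" by (rule J_cont[OF assms(7)])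
  have cq1: "continuous_on {0..L} (J L q)" by (rule J_cont[OF assms(8)])
  have cp2: "continuous_on {0..L} (J L (J L p))" by (rule J_cont[OF cp1])
  have cq2: "continuous_on {0..L} (J L (J L q))" by (rule J_cont[OF cq1])
  have h1: "\<bar>J L p s - J L q s\<bar> \<le> D / M * exp (M * (L - s))" if "s \<in> {0..L}" for s
    by (rule J_diff_bound[OF assms(7,8) M0 assms(9) that])
  have h2: "\<bar>J L (J L p) s - J L (J L q) s\<bar> \<le> D / M / M * exp (M * (L - s))" if "s \<in> {0..L}" for s
    by (rule J_diff_bound[OF cp1 cq1 M0 h1 that])
  define B3 where "B3 = (lam + a') * (D / M / M) + D / M"
  have h3: "\<bar>F L lam u0 a' u p s - F L lam u0 a' u q s\<bar> \<le> B3 * exp (M * (L - s))"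
    if s: "s \<in> {0..L}" for s
  proof -
    let ?X = "J L (J L p) s - J L (J L q) s"
    let ?Y = "J L p s - J L q s"
    let ?Z = "sat u0 (J L (J L p) s) - sat u0 (J L (J L q) s)"
    let ?E = "exp (M * (L - s))"
    have eq: "F L lam u0 a' u p s - F L lam u0 a' u q s = - (lam * ?X) + ?Y - a' * ?Z"
      unfolding F_def by (simp add: algebra_simps)
    have "\<bar>- (lam * ?X) + ?Y - a' * ?Z\<bar> \<le> \<bar>lam * ?X\<bar> + \<bar>?Y\<bar> + \<bar>a' * ?Z\<bar>"
      by (rule tri3)
    also have "\<dots> = lam * \<bar>?X\<bar> + \<bar>?Y\<bar> + a' * \<bar>?Z\<bar>"
      using assms(1,2) by (simp add: abs_mult)
    also have "\<dots> \<le> lam * (D / M / M * ?E) + D / M * ?E + a' * (D / M / M * ?E)"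
    proof (intro add_mono mult_left_mono)
      show "\<bar>?X\<bar> \<le> D / M / M * ?E" by (rule h2[OF s])
      show "\<bar>?Y\<bar> \<le> D / M * ?E" by (rule h1[OF s])
      show "\<bar>?Z\<bar> \<le> D / M / M * ?E" using sat_lip[OF assms(4)] h2[OF s] order_trans by blast
    qed (use assms in auto)
    also have "\<dots> = B3 * ?E" unfolding B3_def by (simp add: algebra_simps add_divide_distrib)
    finally show ?thesis using eq by simp
  qed
  have cFp: "continuous_on {0..L} (F L lam u0 a' u p)" by (rule F_cont[OF assms(4,6,7)])
  have cFq: "continuous_on {0..L} (F L lam u0 a' u q)" by (rule F_cont[OF assms(4,6,8)])
  have "\<bar>Tf L lam u0 a' u c p t - Tf L lam u0 a' u c q t\<bar>
        = \<bar>J L (F L lam u0 a' u p) t - J L (F L lam u0 a' u q) t\<bar>"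
    unfolding Tf_def by simp
  also have "\<dots> \<le> B3 / M * exp (M * (L - t))"
    by (rule J_diff_bound[OF cFp cFq M0 h3 assms(10)])
  also have "\<dots> \<le> D / 2 * exp (M * (L - t))"
  proof (rule mult_right_mono)
    have "(lam + a') * (D / M / M) \<le> M * (D / M / M)"
      using assms D M0 by (intro mult_right_mono) auto
    also have "\<dots> = D / M" using M0 by simp
    finally have "B3 \<le> 2 * D / M" unfolding B3_def by simp
    then have "B3 / M \<le> 2 * D / M / M" using M0 divide_right_mono[of B3 "2 * D / M" M] by simp
    also have "\<dots> = 2 * D / (M * M)" by simp
    also have "\<dots> \<le> 2 * D / 4"
    proof (rule divide_left_mono)
      show "4 \<le> M * M" using M mult_mono[OF M M] by simp
    qed (use D M0 in auto)
    finally show "B3 / M \<le> D / 2" by simp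
  qed simp
  finally show ?thesis .
qed

lemma clamp_real: "(0::real) \<le> L \<Longrightarrow> clamp 0 L x \<in> {0..L}"
  using clamp_in_interval[of 0 L x] by (simp add: cbox_interval)

lemma clamp_real_cancel: "x \<in> {0..L} \<Longrightarrow> clamp 0 L x = (x::real)"
  using clamp_cancel_cbox[of x 0 L] by (simp add: cbox_interval)

lemma exists_fix:
  assumes "lam > 0" "0 \<le> a'" "a' \<le> a" "u0 \<ge> 0" "continuous_on {0..L} u" "L \<ge> 0"
  shows "\<exists>p. continuous_on {0..L} p \<and> (\<forall>t\<in>{0..L}. p t = Tf L lam u0 a' u c p t)"
proof -
  define M where "M = lam + a + 2"
  define E where "E s = exp (M * (L - s))" for s
  have E0: "E s > 0" for s unfolding E_def by simp
  have cE: "continuous_on S E" for S unfolding E_def[abs_def] by (intro continuous_intros)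
  define P where "P q = (\<lambda>s. E s * apply_bcontfun q s)" for q :: "real \<Rightarrow>\<^sub>C real"
  have cP: "continuous_on {0..L} (P q)" for q
    unfolding P_def by (intro continuous_intros cE) auto
  define h where "h q = (\<lambda>t. Tf L lam u0 a' u c (P q) t / E t)" for q
  have ch: "continuous_on (cbox 0 L) (h q)" for q
    unfolding h_def cbox_interval
    by (intro continuous_intros Tf_cont assms cP cE) (use E0 in \<open>simp add: less_imp_neq[symmetric]\<close>)
  define \<Phi> where "\<Phi> q = (SOME g. \<forall>x. apply_bcontfun g x = h q (clamp 0 L x))" for q
  have \<Phi>: "apply_bcontfun (\<Phi> q) x = h q (clamp 0 L x)" for q x
  proof -
    obtain g :: "real \<Rightarrow>\<^sub>C real" where "\<And>x. apply_bcontfun g x = h q (clamp 0 L x)"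
      using continuous_on_cbox_bcontfunE[OF ch[of q]] by metis
    then have "\<exists>g. \<forall>x. apply_bcontfun g x = h q (clamp 0 L x)" by blast
    from someI_ex[OF this] show ?thesis unfolding \<Phi>_def by blast
  qed
  have lip: "\<forall>x y. dist (\<Phi> x) (\<Phi> y) \<le> 1/2 * dist x y"
  proof (intro allI)
    fix q1 q2 :: "real \<Rightarrow>\<^sub>C real"
    show "dist (\<Phi> q1) (\<Phi> q2) \<le> 1/2 * dist q1 q2"
    proof (rule dist_bound)
      fix x
      define t where "t = clamp 0 L x"
      have t: "t \<in> {0..L}" unfolding t_def by (rule clamp_real[OF assms(6)])
      have b: "\<bar>P q1 r - P q2 r\<bar> \<le> dist q1 q2 * exp (M * (L - r))" if "r \<in> {0..L}" for r
      proof -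
        have "\<bar>P q1 r - P q2 r\<bar> = E r * \<bar>apply_bcontfun q1 r - apply_bcontfun q2 r\<bar>"
          unfolding P_def using E0[of r] by (simp add: abs_mult right_diff_distrib[symmetric])
        also have "\<dots> \<le> E r * dist q1 q2"
          using dist_bounded[of q1 r q2] E0[of r] by (simp add: dist_real_def)
        finally show ?thesis unfolding E_def by (simp add: mult.commute)
      qed
      have c: "\<bar>Tf L lam u0 a' u c (P q1) t - Tf L lam u0 a' u c (P q2) t\<bar> \<le> dist q1 q2 / 2 * E t"
        unfolding E_def by (rule contr[OF assms(1-4) M_def assms(5) cP cP b t])
      have "dist (apply_bcontfun (\<Phi> q1) x) (apply_bcontfun (\<Phi> q2) x)
          = \<bar>Tf L lam u0 a' u c (P q1) t - Tf L lam u0 a' u c (P q2) t\<bar> / E t"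
        unfolding \<Phi> h_def t_def[symmetric] dist_real_def using E0[of t]
        by (simp add: diff_divide_distrib[symmetric])
      also have "\<dots> \<le> dist q1 q2 / 2 * E t / E t"
        using divide_right_mono[OF c, of "E t"] E0[of t] by simp
      also have "\<dots> = 1/2 * dist q1 q2" using E0[of t] by simp
      finally show "dist (apply_bcontfun (\<Phi> q1) x) (apply_bcontfun (\<Phi> q2) x) \<le> 1/2 * dist q1 q2" .
    qed
  qed
  obtain q where q: "\<Phi> q = q" using banach_fix_type[OF _ _ lip] by auto
  show ?thesis
  proof (intro exI conjI ballI)
    show "continuous_on {0..L} (P q)" by (rule cP)
    fix t assume t: "t \<in> {0..L}"
    have "apply_bcontfun q t = h q t" using \<Phi>[of q t] q clamp_real_cancel[OF t] by simp
    then show "P q t = Tf L lam u0 a' u c (P q) t"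
      unfolding P_def h_def using E0[of t] by (simp add: field_simps)
  qed
qed

lemma wbound:
  fixes L M \<alpha> r :: real and \<delta> :: "real \<Rightarrow> real"
  assumes "continuous_on {0..L} \<delta>" "L \<ge> 0"
    and hyp: "\<And>D. \<forall>r\<in>{0..L}. \<bar>\<delta> r\<bar> \<le> D * exp (M * (L - r)) \<Longrightarrow>
                  \<forall>r\<in>{0..L}. \<bar>\<delta> r\<bar> \<le> (\<alpha> + D / 2) * exp (M * (L - r))"
    and r: "r \<in> {0..L}"
  shows "\<bar>\<delta> r\<bar> \<le> 2 * \<alpha> * exp (M * (L - r))"
proof -
  define E where "E r = exp (M * (L - r))" for r
  have E0: "E r > 0" for r unfolding E_def by simp
  define g where "g r = \<bar>\<delta> r\<bar> / E r" for r
  have cg: "continuous_on {0..L} g" unfolding g_def[abs_def] E_def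
    by (intro continuous_intros assms(1)) simp
  have "compact (g ` {0..L})" by (rule compact_continuous_image[OF cg compact_Icc])
  then have bdd: "bdd_above (g ` {0..L})" by (meson bounded_imp_bdd_above compact_imp_bounded)
  have ne: "g ` {0..L} \<noteq> {}" using assms(2) by auto
  define S where "S = Sup (g ` {0..L})"
  have gS: "g r \<le> S" if "r \<in> {0..L}" for r unfolding S_def using bdd that by (simp add: cSUP_upper)
  have b1: "\<forall>r\<in>{0..L}. \<bar>\<delta> r\<bar> \<le> S * exp (M * (L - r))"
  proof
    fix r assume "r \<in> {0..L}"
    then have "\<bar>\<delta> r\<bar> / E r \<le> S" using gS g_def by simp
    then show "\<bar>\<delta> r\<bar> \<le> S * exp (M * (L - r))" using E0[of r] by (simp add: E_def divide_le_eq)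
  qed
  note b2 = hyp[OF b1]
  have "S \<le> \<alpha> + S / 2" unfolding S_def
  proof (rule cSUP_least[OF ne[unfolded image_is_empty]])
    fix r assume "r \<in> {0..L}"
    then have "\<bar>\<delta> r\<bar> \<le> (\<alpha> + S / 2) * E r" using b2 E_def by simp
    then show "g r \<le> \<alpha> + Sup (g ` {0..L}) / 2" unfolding g_def S_def[symmetric]
      using E0[of r] by (simp add: divide_le_eq)
  qed
  then have "S \<le> 2 * \<alpha>" by simp
  moreover have "\<bar>\<delta> r\<bar> \<le> S * E r" using b1 r E_def by simp
  ultimately show ?thesis using E0[of r] unfolding E_def
    by (meson mult_right_mono less_imp_le order_trans)
qed

lemma J_fun_mult: "J L (\<lambda>s. c * f s) = (\<lambda>t. c * J L f t)"
  by (rule ext) (rule J_mult)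

locale setting =
  fixes L lam u0 a :: real and u :: "real \<Rightarrow> real"
  assumes L: "L > 0" and lam: "lam > 0" and a: "a \<ge> 0" and u0: "u0 \<ge> 0"
    and u: "continuous_on {0..L} u"
begin

definition M where "M = lam + a + 2"

lemma M0: "M > 0" using lam a unfolding M_def by simp

lemma E1: "t \<in> {0..L} \<Longrightarrow> 1 \<le> exp (M * (L - t))"
  using M0 by simp

definition Pfix where
  "Pfix a' v c = (SOME p. continuous_on {0..L} p \<and> (\<forall>t\<in>{0..L}. p t = Tf L lam u0 a' v c p t))"

lemma Pfix:
  assumes "0 \<le> a'" "a' \<le> a" "continuous_on {0..L} v"
  shows "continuous_on {0..L} (Pfix a' v c)" "t \<in> {0..L} \<Longrightarrow> Pfix a' v c t = Tf L lam u0 a' v c (Pfix a' v c) t"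
proof -
  have "\<exists>p. continuous_on {0..L} p \<and> (\<forall>t\<in>{0..L}. p t = Tf L lam u0 a' v c p t)"
    by (rule exists_fix[OF lam assms(1,2) u0 assms(3)]) (use L in simp)
  from someI_ex[OF this] show "continuous_on {0..L} (Pfix a' v c)"
    "t \<in> {0..L} \<Longrightarrow> Pfix a' v c t = Tf L lam u0 a' v c (Pfix a' v c) t"
    unfolding Pfix_def by blast+
qed

definition V where "V c = J L (J L (Pfix a u c)) 0"

lemma Pfix_lip:
  assumes r: "r \<in> {0..L}"
  shows "\<bar>Pfix a u c r - Pfix a u d r\<bar> \<le> 2 * \<bar>c - d\<bar> * exp (M * (L - r))"
proof (rule wbound[where \<delta> = "\<lambda>r. Pfix a u c r - Pfix a u d r", OF _ _ _ r])
  note pc = Pfix[OF a order_refl u, where c=c] and pd = Pfix[OF a order_refl u, where c=d]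
  show "continuous_on {0..L} (\<lambda>r. Pfix a u c r - Pfix a u d r)"
    by (intro continuous_intros pc(1) pd(1))
  show "L \<ge> 0" using L by simp
  fix D assume hD: "\<forall>r\<in>{0..L}. \<bar>Pfix a u c r - Pfix a u d r\<bar> \<le> D * exp (M * (L - r))"
  show "\<forall>r\<in>{0..L}. \<bar>Pfix a u c r - Pfix a u d r\<bar> \<le> (\<bar>c - d\<bar> + D / 2) * exp (M * (L - r))"
  proof
    fix r assume r: "r \<in> {0..L}"
    have ct: "\<bar>Tf L lam u0 a u c (Pfix a u c) r - Tf L lam u0 a u c (Pfix a u d) r\<bar> \<le> D / 2 * exp (M * (L - r))"
      by (rule contr[OF lam a order_refl u0 M_def u pc(1) pd(1) _ r]) (use hD in auto)
    have "Pfix a u c r - Pfix a u d r = (c - d) + (Tf L lam u0 a u c (Pfix a u c) r - Tf L lam u0 a u c (Pfix a u d) r)"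
      using pc(2)[OF r] pd(2)[OF r] unfolding Tf_def by simp
    then have "\<bar>Pfix a u c r - Pfix a u d r\<bar> \<le> \<bar>c - d\<bar> + D / 2 * exp (M * (L - r))"
      using ct by linarith
    also have "\<dots> \<le> \<bar>c - d\<bar> * exp (M * (L - r)) + D / 2 * exp (M * (L - r))"
      using E1[OF r] mult_left_mono[of 1 "exp (M * (L - r))" "\<bar>c - d\<bar>"] by simp
    finally show "\<bar>Pfix a u c r - Pfix a u d r\<bar> \<le> (\<bar>c - d\<bar> + D / 2) * exp (M * (L - r))"
      by (simp add: algebra_simps)
  qed
qed

lemma V_lip: "\<bar>V c - V d\<bar> \<le> (2 / M / M * exp (M * L)) * \<bar>c - d\<bar>"
proof -
  note pc = Pfix[OF a order_refl u, where c=c] and pd = Pfix[OF a order_refl u, where c=d]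
  have 1: "\<bar>J L (Pfix a u c) s - J L (Pfix a u d) s\<bar> \<le> 2 * \<bar>c - d\<bar> / M * exp (M * (L - s))"
    if "s \<in> {0..L}" for s
    by (rule J_diff_bound[OF pc(1) pd(1) M0 Pfix_lip that])
  have "\<bar>V c - V d\<bar> \<le> 2 * \<bar>c - d\<bar> / M / M * exp (M * (L - 0))"
    unfolding V_def by (rule J_diff_bound[OF J_cont[OF pc(1)] J_cont[OF pd(1)] M0 1]) (use L in auto)
  then show ?thesis by (simp add: algebra_simps)
qed

lemma V_cont: "continuous_on UNIV V"
proof (rule lipschitz_on_continuous_on[where L = "2 / M / M * exp (M * L)"], rule lipschitz_onI)
  show "0 \<le> 2 / M / M * exp (M * L)" using M0 by simp
  fix x y show "dist (V x) (V y) \<le> 2 / M / M * exp (M * L) * dist x y"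
    using V_lip[of x y] by (simp add: dist_real_def)
qed

definition W0 where "W0 = Pfix 0 (\<lambda>_. 0) 1"
definition w0 where "w0 = J L (J L W0) 0"

lemma W0: "continuous_on {0..L} W0" "t \<in> {0..L} \<Longrightarrow> W0 t = Tf L lam u0 0 (\<lambda>_. 0) 1 W0 t"
  unfolding W0_def using Pfix[OF order_refl a continuous_on_const] by auto

lemma F_scale: "F L lam u0 0 (\<lambda>_. 0) (\<lambda>s. c * W0 s) = (\<lambda>s. c * F L lam u0 0 (\<lambda>_. 0) W0 s)"
  by (rule ext) (simp add: F_def J_fun_mult algebra_simps)

lemma scale_fix: "t \<in> {0..L} \<Longrightarrow> c * W0 t = Tf L lam u0 0 (\<lambda>_. 0) c (\<lambda>s. c * W0 s) t"
  using W0(2)[of t] unfolding Tf_def F_scale J_fun_mult by (simp add: right_diff_distrib)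

lemma compare_bound: "\<exists>K. \<forall>c. \<bar>V c - c * w0\<bar> \<le> K"
proof -
  have "compact (u ` {0..L})" by (rule compact_continuous_image[OF u compact_Icc])
  from compact_imp_bounded[OF this] obtain U where "\<forall>y\<in>u ` {0..L}. norm y \<le> U"
    unfolding bounded_iff by blast
  then have U: "\<And>x. x \<in> {0..L} \<Longrightarrow> \<bar>u x\<bar> \<le> U" by simp
  define B0 where "B0 = lam * U + a * u0"
  have cW: "continuous_on {0..L} (\<lambda>s. c * W0 s)" for c by (intro continuous_intros W0(1))
  have main: "\<bar>Pfix a u c r - c * W0 r\<bar> \<le> 2 * (B0 * L) * exp (M * (L - r))" if r: "r \<in> {0..L}" for c r
  proof (rule wbound[where \<delta> = "\<lambda>r. Pfix a u c r - c * W0 r", OF _ _ _ r])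
    note pc = Pfix[OF a order_refl u, where c=c]
    show "continuous_on {0..L} (\<lambda>r. Pfix a u c r - c * W0 r)"
      by (intro continuous_intros pc(1) W0(1))
    show "L \<ge> 0" using L by simp
    fix D assume hD: "\<forall>r\<in>{0..L}. \<bar>Pfix a u c r - c * W0 r\<bar> \<le> D * exp (M * (L - r))"
    show "\<forall>r\<in>{0..L}. \<bar>Pfix a u c r - c * W0 r\<bar> \<le> (B0 * L + D / 2) * exp (M * (L - r))"
    proof
      fix r assume r: "r \<in> {0..L}"
      have ct: "\<bar>Tf L lam u0 0 (\<lambda>_. 0) c (Pfix a u c) r - Tf L lam u0 0 (\<lambda>_. 0) c (\<lambda>s. c * W0 s) r\<bar>
          \<le> D / 2 * exp (M * (L - r))"
        by (rule contr[OF lam order_refl a u0 M_def continuous_on_const pc(1) cW _ r]) (use hD in auto)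
      have cF1: "continuous_on {0..L} (F L lam u0 0 (\<lambda>_. 0) (Pfix a u c))"
        by (rule F_cont[OF u0 continuous_on_const pc(1)])
      have cF2: "continuous_on {0..L} (F L lam u0 a u (Pfix a u c))"
        by (rule F_cont[OF u0 u pc(1)])
      have "Tf L lam u0 a u c (Pfix a u c) r - Tf L lam u0 0 (\<lambda>_. 0) c (Pfix a u c) r
          = J L (\<lambda>s. F L lam u0 0 (\<lambda>_. 0) (Pfix a u c) s - F L lam u0 a u (Pfix a u c) s) r"
        unfolding Tf_def J_diff[OF cF1 cF2 r] by simp
      also have "\<bar>\<dots>\<bar> \<le> B0 * L"
      proof (rule J_bound_const)
        show "continuous_on {0..L} (\<lambda>s. F L lam u0 0 (\<lambda>_. 0) (Pfix a u c) s - F L lam u0 a u (Pfix a u c) s)"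
          by (intro continuous_intros cF1 cF2)
        fix s assume s: "s \<in> {0..L}"
        let ?S = "sat u0 (J L (J L (Pfix a u c)) s)"
        have "F L lam u0 0 (\<lambda>_. 0) (Pfix a u c) s - F L lam u0 a u (Pfix a u c) s = - (lam * u s) + a * ?S"
          unfolding F_def by simp
        also have "\<bar>\<dots>\<bar> \<le> \<bar>lam * u s\<bar> + \<bar>a * ?S\<bar>" by (rule tri2)
        also have "\<dots> = lam * \<bar>u s\<bar> + a * \<bar>?S\<bar>"
          using lam a by (simp add: abs_mult)
        also have "\<dots> \<le> lam * U + a * u0"
          using U[OF s] sat_bound[OF u0] lam a by (intro add_mono mult_left_mono) auto
        finally show "\<bar>F L lam u0 0 (\<lambda>_. 0) (Pfix a u c) s - F L lam u0 a u (Pfix a u c) s\<bar> \<le> B0"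
          unfolding B0_def .
      qed (rule r)
      finally have t1: "\<bar>Tf L lam u0 a u c (Pfix a u c) r - Tf L lam u0 0 (\<lambda>_. 0) c (Pfix a u c) r\<bar> \<le> B0 * L" .
      have "0 \<le> B0 * L" using t1 by linarith
      then have "B0 * L \<le> B0 * L * exp (M * (L - r))"
        using E1[OF r] mult_left_mono[of 1 "exp (M * (L - r))" "B0 * L"] by simp
      moreover have "Pfix a u c r - c * W0 r = (Tf L lam u0 a u c (Pfix a u c) r - Tf L lam u0 0 (\<lambda>_. 0) c (Pfix a u c) r)
          + (Tf L lam u0 0 (\<lambda>_. 0) c (Pfix a u c) r - Tf L lam u0 0 (\<lambda>_. 0) c (\<lambda>s. c * W0 s) r)"
        using pc(2)[OF r] scale_fix[OF r, of c] by simp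
      ultimately have "\<bar>Pfix a u c r - c * W0 r\<bar> \<le> B0 * L * exp (M * (L - r)) + D / 2 * exp (M * (L - r))"
        using t1 ct by linarith
      then show "\<bar>Pfix a u c r - c * W0 r\<bar> \<le> (B0 * L + D / 2) * exp (M * (L - r))"
        by (simp add: algebra_simps)
    qed
  qed
  show ?thesis
  proof (intro exI allI)
    fix c
    note pc = Pfix[OF a order_refl u, where c=c]
    have 1: "\<bar>J L (Pfix a u c) s - J L (\<lambda>s. c * W0 s) s\<bar> \<le> 2 * (B0 * L) / M * exp (M * (L - s))"
      if "s \<in> {0..L}" for s
      by (rule J_diff_bound[OF pc(1) cW M0 main that])
    have "\<bar>J L (J L (Pfix a u c)) 0 - J L (J L (\<lambda>s. c * W0 s)) 0\<bar> \<le> 2 * (B0 * L) / M / M * exp (M * (L - 0))"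
      by (rule J_diff_bound[OF J_cont[OF pc(1)] J_cont[OF cW] M0 1]) (use L in auto)
    then show "\<bar>V c - c * w0\<bar> \<le> 2 * (B0 * L) / M / M * exp (M * (L - 0))"
      unfolding V_def w0_def J_fun_mult by simp
  qed
qed

lemma w0_ne: "w0 \<noteq> 0"
proof
  assume w00: "w0 = 0"
  define w where "w = J L (J L W0)"
  define w1 where "w1 = (\<lambda>t. - J L W0 t)"
  note cW0 = W0(1)
  have cJ: "continuous_on {0..L} (J L W0)" by (rule J_cont[OF cW0])
  have cw: "continuous_on {0..L} w" unfolding w_def by (rule J_cont[OF cJ])
  have cw1: "continuous_on {0..L} w1" unfolding w1_def by (intro continuous_intros cJ)
  have cF: "continuous_on {0..L} (F L lam u0 0 (\<lambda>_. 0) W0)"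
    by (rule F_cont[OF u0 continuous_on_const cW0])
  have dw: "(w has_real_derivative w1 x) (at x)" if x: "x \<in> {0<..<L}" for x
    using J_deriv_at[OF cJ x] unfolding w_def w1_def .
  have dw1: "(w1 has_real_derivative W0 x) (at x)" if x: "x \<in> {0<..<L}" for x
    using DERIV_minus[OF J_deriv_at[OF cW0 x]] unfolding w1_def by simp
  have dW0: "(W0 has_real_derivative (- lam * w x - w1 x)) (at x)" if x: "x \<in> {0<..<L}" for x
  proof -
    have "((\<lambda>t. 1 - J L (F L lam u0 0 (\<lambda>_. 0) W0) t) has_real_derivative
        (0 - - F L lam u0 0 (\<lambda>_. 0) W0 x)) (at x)"
      by (intro DERIV_diff DERIV_const J_deriv_at[OF cF x])
    moreover have "0 - - F L lam u0 0 (\<lambda>_. 0) W0 x = - lam * w x - w1 x"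
      unfolding F_def w_def w1_def by simp
    ultimately have "(Tf L lam u0 0 (\<lambda>_. 0) 1 W0 has_real_derivative (- lam * w x - w1 x)) (at x)"
      unfolding Tf_def[abs_def] by simp
    then show ?thesis
      by (rule has_field_derivative_transform_within_open[OF _ open_greaterThanLessThan x])
         (use W0(2) in auto)
  qed
  define H where "H t = 2 * (W0 t * w t) - w1 t * w1 t + w t * w t" for t
  have dH: "(H has_real_derivative (- 2 * lam * (w x * w x))) (at x)" if x: "x \<in> {0<..<L}" for x
  proof -
    note dd = DERIV_add[OF DERIV_diff[OF DERIV_cmult[OF DERIV_mult[OF dW0[OF x] dw[OF x]]]
        DERIV_mult[OF dw1[OF x] dw1[OF x]]] DERIV_mult[OF dw[OF x] dw[OF x]], of 2]
    show ?thesis using dd unfolding H_def[abs_def] by (simp add: algebra_simps)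
  qed
  have cH: "continuous_on {0..L} H" unfolding H_def[abs_def]
    by (intro continuous_intros cW0 cw cw1)
  have "((\<lambda>x. - 2 * lam * (w x * w x)) has_integral (H L - H 0)) {0..L}"
  proof (rule fundamental_theorem_of_calculus_interior[OF _ cH])
    show "0 \<le> L" using L by simp
    fix x assume "x \<in> {0<..<L}"
    then show "(H has_vector_derivative - 2 * lam * (w x * w x)) (at x)"
      using dH has_real_derivative_iff_has_vector_derivative by blast
  qed
  moreover have "H L = 0" unfolding H_def w_def w1_def J_L by simp
  moreover have "H 0 = - (w1 0 * w1 0)" unfolding H_def using w00 unfolding w0_def w_def by simp
  ultimately have I: "((\<lambda>x. - 2 * lam * (w x * w x)) has_integral (w1 0 * w1 0)) {0..L}" by simp
  have I2: "((\<lambda>x. 2 * lam * (w x * w x)) has_integral - (w1 0 * w1 0)) {0..L}"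
    using has_integral_neg[OF I] by simp
  have "0 \<le> - (w1 0 * w1 0)"
    by (rule has_integral_nonneg[OF I2]) (use lam in simp)
  then have "w1 0 * w1 0 = 0" by (simp add: le_less)
  with I2 have I3: "((\<lambda>x. 2 * lam * (w x * w x)) has_integral 0) (cbox 0 L)" by (simp add: cbox_interval)
  have wz: "w x = 0" if x: "x \<in> {0..L}" for x
  proof -
    have "2 * lam * (w x * w x) = 0"
    proof (rule has_integral_0_cbox_imp_0[OF _ _ I3])
      show "continuous_on (cbox 0 L) (\<lambda>x. 2 * lam * (w x * w x))"
        unfolding cbox_interval by (intro continuous_intros cw)
      show "box 0 L \<noteq> {}" using L by simp
      show "x \<in> cbox 0 L" using x by (simp add: cbox_interval)
    qed (use lam in simp)
    then show ?thesis using lam by simp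
  qed
  have w1z: "w1 x = 0" if x: "x \<in> {0<..<L}" for x
  proof -
    have "(w has_real_derivative 0) (at x)"
      by (rule has_field_derivative_transform_within_open[OF DERIV_const open_greaterThanLessThan x])
         (use wz in auto)
    then show ?thesis using DERIV_unique dw[OF x] by blast
  qed
  have W0z: "W0 x = 0" if x: "x \<in> {0<..<L}" for x
  proof -
    have "(w1 has_real_derivative 0) (at x)"
      by (rule has_field_derivative_transform_within_open[OF DERIV_const open_greaterThanLessThan x])
         (use w1z in auto)
    then show ?thesis using DERIV_unique dw1[OF x] by blast
  qed
  have "W0 L = W0 (L / 2)"
  proof (rule DERIV_isconst_end[where f=W0])
    show "L / 2 < L" using L by simp
    show "continuous_on {L / 2..L} W0" by (rule continuous_on_subset[OF cW0]) (use L in auto)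
    fix x assume "L / 2 < x" "x < L"
    then have x: "x \<in> {0<..<L}" using L by auto
    show "(W0 has_real_derivative 0) (at x)"
      using dW0[OF x] wz[of x] w1z[OF x] x by simp
  qed
  also have "\<dots> = 0" using W0z L by simp
  finally have "W0 L = 0" .
  moreover have "W0 L = 1" using W0(2)[of L] L unfolding Tf_def J_L by simp
  ultimately show False by simp
qed

lemma root: "\<exists>c. V c = 0"
proof -
  obtain K where K: "\<And>c. \<bar>V c - c * w0\<bar> \<le> K" using compare_bound by blast
  define c1 where "c1 = (K + 1) / w0"
  define c2 where "c2 = - (K + 1) / w0"
  have "c1 * w0 = K + 1" unfolding c1_def using w0_ne by simp
  then have v1: "0 \<le> V c1" using K[of c1] by linarith
  have "c2 * w0 = - (K + 1)" unfolding c2_def using w0_ne by simp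
  then have v2: "V c2 \<le> 0" using K[of c2] by linarith
  have cV: "continuous_on {x..y} V" for x y by (rule continuous_on_subset[OF V_cont]) simp
  show ?thesis
  proof (cases "c2 \<le> c1")
    case True
    from IVT'[of V c2 0 c1, OF v2 v1 True cV] show ?thesis by blast
  next
    case False
    then have "c1 \<le> c2" by simp
    from IVT2'[of V c2 0 c1, OF v2 v1 this cV] show ?thesis by blast
  qed
qed

end

lemma L2_on_cont:
  assumes "continuous_on {0..L} f"
  shows "L2_on L f"
proof -
  have g: "set_integrable lborel {0<..<L} g" if "continuous_on {0..L} g" for g :: "real \<Rightarrow> real"
    by (rule set_integrable_subset[OF borel_integrable_atLeastAtMost'[OF that]]) auto
  have "set_integrable lborel {0<..<L} f" by (rule g[OF assms])
  then have "set_borel_measurable lborel {0<..<L} f"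
    unfolding set_integrable_def set_borel_measurable_def by (rule borel_measurable_integrable)
  moreover have "set_integrable lborel {0<..<L} (\<lambda>x. (f x)\<^sup>2)"
    by (rule g) (intro continuous_intros assms)
  ultimately show ?thesis unfolding L2_on_def by blast
qed

lemma LINT_cont:
  fixes h :: "real \<Rightarrow> real" and L :: real
  assumes "continuous_on {0..L} h"
  shows "(LINT x:{0<..<L}|lborel. h x) = integral {0..L} h"
proof -
  have "set_integrable lborel {0<..<L} h"
    by (rule set_integrable_subset[OF borel_integrable_atLeastAtMost'[OF assms]]) auto
  then have "(LINT x:{0<..<L}|lborel. h x) = integral {0<..<L} h"
    by (rule set_borel_integral_eq_integral(2))
  then show ?thesis by (simp add: integral_open_interval_real)
qed

lemma weak_deriv_cont:
  assumes L: "L > 0" and cf: "continuous_on {0..L} f" and cg: "continuous_on {0..L} g"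
    and d: "\<And>x. x \<in> {0<..<L} \<Longrightarrow> (f has_real_derivative g x) (at x)"
  shows "weak_deriv L f g"
  unfolding weak_deriv_def
proof (intro allI impI)
  fix phi assume "test_fun L phi"
  then obtain D e where D0: "D 0 = phi" and dD: "\<And>k x. (D k has_real_derivative D (Suc k) x) (at x)"
    and e: "e > 0" and van: "\<And>x. x < e \<or> x > L - e \<Longrightarrow> phi x = 0"
    unfolding test_fun_def by blast
  have dphi: "(phi has_real_derivative D 1 x) (at x)" for x using dD[of 0 x] D0 by simp
  have dv: "deriv phi x = D 1 x" for x by (rule DERIV_imp_deriv[OF dphi])
  have cphi: "continuous_on S phi" for S
    by (rule continuous_at_imp_continuous_on) (use dphi DERIV_isCont in blast)
  have cD1: "continuous_on S (D 1)" for S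
    by (rule continuous_at_imp_continuous_on) (use dD[of 1] DERIV_isCont in blast)
  have "((\<lambda>x. g x * phi x + D 1 x * f x) has_integral (f L * phi L - f 0 * phi 0)) {0..L}"
  proof (rule fundamental_theorem_of_calculus_interior)
    show "0 \<le> L" using L by simp
    show "continuous_on {0..L} (\<lambda>x. f x * phi x)" by (intro continuous_intros cf cphi)
    fix x assume "x \<in> {0<..<L}"
    then show "((\<lambda>x. f x * phi x) has_vector_derivative g x * phi x + D 1 x * f x) (at x)"
      using DERIV_mult[OF d dphi] has_real_derivative_iff_has_vector_derivative by blast
  qed
  moreover have "phi L = 0" "phi 0 = 0" using van e by auto
  ultimately have I: "((\<lambda>x. g x * phi x + D 1 x * f x) has_integral 0) {0..L}" by simp
  have i1: "(\<lambda>x. g x * phi x) integrable_on {0..L}"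
    by (intro integrable_continuous_real continuous_intros cg cphi)
  have i2: "(\<lambda>x. f x * D 1 x) integrable_on {0..L}"
    by (intro integrable_continuous_real continuous_intros cf cD1)
  have "integral {0..L} (\<lambda>x. g x * phi x) + integral {0..L} (\<lambda>x. f x * D 1 x) = 0"
    using integral_add[OF i1 i2] integral_unique[OF I] by (simp add: mult.commute)
  moreover have "(LINT x:{0<..<L}|lborel. f x * deriv phi x) = integral {0..L} (\<lambda>x. f x * D 1 x)"
    unfolding dv by (rule LINT_cont) (intro continuous_intros cf cD1)
  moreover have "(LINT x:{0<..<L}|lborel. g x * phi x) = integral {0..L} (\<lambda>x. g x * phi x)"
    by (rule LINT_cont) (intro continuous_intros cg cphi)
  ultimately show "(LINT x:{0<..<L}|lborel. f x * deriv phi x) = - (LINT x:{0<..<L}|lborel. g x * phi x)"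
    by simp
qed

lemma (in setting) solution:
  "\<exists>v v1 v2 v3. H3 L v v1 v2 v3 \<and> v 0 = 0 \<and> v L = 0 \<and> v1 L = 0 \<and>
     (\<forall>x\<in>{0<..<L}. lam * v x + v3 x + v1 x + a * sat u0 (v x) = lam * u x)"
proof -
  obtain c where c: "V c = 0" using root by blast
  define p where "p = Pfix a u c"
  have cp: "continuous_on {0..L} p" and fp: "\<And>t. t \<in> {0..L} \<Longrightarrow> p t = Tf L lam u0 a u c p t"
    unfolding p_def using Pfix[OF a order_refl u] by auto
  define v where "v = J L (J L p)"
  define v1 where "v1 = (\<lambda>t. - J L p t)"
  define v3 where "v3 = F L lam u0 a u p"
  have cJ: "continuous_on {0..L} (J L p)" by (rule J_cont[OF cp])
  have cv: "continuous_on {0..L} v" unfolding v_def by (rule J_cont[OF cJ])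
  have cv1: "continuous_on {0..L} v1" unfolding v1_def by (intro continuous_intros cJ)
  have cv3: "continuous_on {0..L} v3" unfolding v3_def by (rule F_cont[OF u0 u cp])
  have dv: "(v has_real_derivative v1 x) (at x)" if x: "x \<in> {0<..<L}" for x
    using J_deriv_at[OF cJ x] unfolding v_def v1_def .
  have dv1: "(v1 has_real_derivative p x) (at x)" if x: "x \<in> {0<..<L}" for x
    using DERIV_minus[OF J_deriv_at[OF cp x]] unfolding v1_def by simp
  have dp: "(p has_real_derivative v3 x) (at x)" if x: "x \<in> {0<..<L}" for x
  proof -
    have "((\<lambda>t. c - J L v3 t) has_real_derivative (0 - - v3 x)) (at x)"
      by (intro DERIV_diff DERIV_const J_deriv_at[OF cv3 x])
    then have "(Tf L lam u0 a u c p has_real_derivative v3 x) (at x)"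
      unfolding Tf_def[abs_def] v3_def by simp
    then show ?thesis
      by (rule has_field_derivative_transform_within_open[OF _ open_greaterThanLessThan x])
         (use fp in auto)
  qed
  have "H3 L v v1 p v3"
    unfolding H3_def
    using L2_on_cont[OF cv] L2_on_cont[OF cv1] L2_on_cont[OF cp] L2_on_cont[OF cv3]
      weak_deriv_cont[OF L cv cv1 dv] weak_deriv_cont[OF L cv1 cp dv1] weak_deriv_cont[OF L cp cv3 dp]
      cv cv1 cp by blast
  moreover have "v 0 = 0" using c unfolding v_def V_def p_def .
  moreover have "v L = 0" unfolding v_def J_L ..
  moreover have "v1 L = 0" unfolding v1_def J_L by simp
  moreover have "\<forall>x\<in>{0<..<L}. lam * v x + v3 x + v1 x + a * sat u0 (v x) = lam * u x"
    unfolding v_def v1_def v3_def F_def by simp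
  ultimately show ?thesis by blast
qed

theorem mainTheorem4:
  fixes L a u0 lam :: real and u u1 u2 u3 :: "real \<Rightarrow> real"
  assumes "L > 0" and "a > 0" and "u0 > 0" and "lam > 0"
    and "H3 L u u1 u2 u3" and "u 0 = 0" and "u L = 0" and "u1 L = 0"
  shows "\<exists>v v1 v2 v3. H3 L v v1 v2 v3 \<and> v 0 = 0 \<and> v L = 0 \<and> v1 L = 0 \<and>
           (AE x in lborel. x \<in> {0<..<L} \<longrightarrow>
              lam * v x + v3 x + v1 x + a * sat u0 (v x) = lam * u x)"
proof -
  have cu: "continuous_on {0..L} u" using assms(5) unfolding H3_def by blast
  interpret setting L lam u0 a u
    by unfold_locales (use assms cu in auto)
  obtain v v1 v2 v3 where H: "H3 L v v1 v2 v3" "v 0 = 0" "v L = 0" "v1 L = 0"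
    and eq: "\<forall>x\<in>{0<..<L}. lam * v x + v3 x + v1 x + a * sat u0 (v x) = lam * u x"
    using solution by blast
  have "AE x in lborel. x \<in> {0<..<L} \<longrightarrow> lam * v x + v3 x + v1 x + a * sat u0 (v x) = lam * u x"
    using eq by (intro AE_I2) blast
  with H show ?thesis by blast
qed


end
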